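(* Let $\pi\colon U\to\mathbf{DT}$ be a type specification and $f\colon X\to Y$ a morphism of schemas of type $\pi$. For a sheaf $\mathcal{K}_Y$ on $Y$ define $f^*\mathcal{K}_Y$ on $\mathbf{Sub}(X)$ by $f^*\mathcal{K}_Y(U)=\mathcal{K}_Y(f(U))$, where $f(U)\in\mathbf{Sub}(Y)$ is the image of $U$; for a sheaf $\mathcal{K}_X$ on $X$ define $f_*\mathcal{K}_X$ on $\mathbf{Sub}(Y)$ by $f_*\mathcal{K}_X(V)=\mathcal{K}_X(f^{-1}(V))$, where $f^{-1}(V)\in\mathbf{Sub}(X)$ is the preimage of $V$. Then these define an adjunction $f^*\colon\mathbf{Shv}(Y)\rightleftarrows\mathbf{Shv}(X)\colon f_*$ with $f^*$ left adjoint to $f_*$.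
   Context: A type specification is a function of sets $\pi\colon U\to\mathbf{DT}$. A simple schema is a pair $(C,\sigma)$ with $C$ a finite (possibly empty) totally ordered set and $\sigma\colon C\to\mathbf{DT}$ a function; morphisms $(C,\sigma)\to(C',\sigma')$ are order-preserving $f\colon C\to C'$ with $\sigma'\circ f=\sigma$; this is the category $\mathcal{S}$. A schema of type $\pi$ is a functor $X\colon\mathcal{S}^{op}\to\mathbf{Sets}$; morphisms of schemas are natural transformations. A subschema of $X$ is a subfunctor $X'\subset X$; subschemas form a poset category $\mathbf{Sub}(X)$ under inclusion, in which the colimit of a diagram is the smallest subschema containing all its members. A sheaf on $X$ is a functor $\mathcal{K}\colon\mathbf{Sub}(X)^{op}\to\mathbf{Sets}$ such that for every diagram $D\colon I\to\mathbf{Sub}(X)$ the natural map $\mathcal{K}(\mathrm{colim}\,D)\to\lim\mathcal{K}\circ D$ is a bijection; $\mathbf{Shv}(X)$ is the category of sheaves with natural transformations. *)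

theory Defs
  imports Main "HOL-Library.FuncSet"
begin

text \<open>Simple schemas are represented by the skeleton of the category S: an object
  (C, sigma) with |C| = n is identified with the list [sigma(0),...,sigma(n-1)] of data
  types.\<close>

definition simple_mor :: "'dt list \<Rightarrow> 'dt list \<Rightarrow> (nat \<Rightarrow> nat) \<Rightarrow> bool" where
  "simple_mor s t h \<longleftrightarrow>
     (\<forall>i < length s. h i < length t \<and> t ! (h i) = s ! i) \<and>
     (\<forall>i j. i \<le> j \<and> j < length s \<longrightarrow> h i \<le> h j)"

text \<open>A schema: a functor S^op -> Sets, given by object sets X s and actions
  XA s t h : X t -> X s for a morphism h : s -> t.\<close>

definition is_schema :: "('dt list \<Rightarrow> 'x set) \<Rightarrow> ('dt list \<Rightarrow> 'dt list \<Rightarrow> (nat \<Rightarrow> nat) \<Rightarrow> 'x \<Rightarrow> 'x) \<Rightarrow> bool" where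
  "is_schema X XA \<longleftrightarrow>
     (\<forall>s t h. simple_mor s t h \<longrightarrow> XA s t h \<in> X t \<rightarrow> X s) \<and>
     (\<forall>s t h h'. simple_mor s t h \<and> (\<forall>i < length s. h i = h' i) \<longrightarrow>
        (\<forall>x \<in> X t. XA s t h x = XA s t h' x)) \<and>
     (\<forall>s. \<forall>x \<in> X s. XA s s id x = x) \<and>
     (\<forall>s t u h g. simple_mor s t h \<and> simple_mor t u g \<longrightarrow>
        (\<forall>x \<in> X u. XA s u (g \<circ> h) x = XA s t h (XA t u g x)))"

definition is_schema_mor ::
  "('dt list \<Rightarrow> 'x set) \<Rightarrow> ('dt list \<Rightarrow> 'dt list \<Rightarrow> (nat \<Rightarrow> nat) \<Rightarrow> 'x \<Rightarrow> 'x) \<Rightarrow>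
   ('dt list \<Rightarrow> 'y set) \<Rightarrow> ('dt list \<Rightarrow> 'dt list \<Rightarrow> (nat \<Rightarrow> nat) \<Rightarrow> 'y \<Rightarrow> 'y) \<Rightarrow>
   ('dt list \<Rightarrow> 'x \<Rightarrow> 'y) \<Rightarrow> bool" where
  "is_schema_mor X XA Y YA f \<longleftrightarrow>
     (\<forall>s. f s \<in> X s \<rightarrow> Y s) \<and>
     (\<forall>s t h. simple_mor s t h \<longrightarrow> (\<forall>x \<in> X t. f s (XA s t h x) = YA s t h (f t x)))"

definition is_subschema ::
  "('dt list \<Rightarrow> 'x set) \<Rightarrow> ('dt list \<Rightarrow> 'dt list \<Rightarrow> (nat \<Rightarrow> nat) \<Rightarrow> 'x \<Rightarrow> 'x) \<Rightarrow> ('dt list \<Rightarrow> 'x set) \<Rightarrow> bool" where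
  "is_subschema X XA S \<longleftrightarrow>
     (\<forall>s. S s \<subseteq> X s) \<and>
     (\<forall>s t h x. simple_mor s t h \<and> x \<in> S t \<longrightarrow> XA s t h x \<in> S s)"

definition sub_colim ::
  "('dt list \<Rightarrow> 'x set) \<Rightarrow> ('dt list \<Rightarrow> 'dt list \<Rightarrow> (nat \<Rightarrow> nat) \<Rightarrow> 'x \<Rightarrow> 'x) \<Rightarrow>
   'i set \<Rightarrow> ('i \<Rightarrow> 'dt list \<Rightarrow> 'x set) \<Rightarrow> 'dt list \<Rightarrow> 'x set" where
  "sub_colim X XA I D = (\<lambda>s. \<Inter> {S s | S. is_subschema X XA S \<and> (\<forall>i \<in> I. D i \<le> S)})"

definition is_presheaf ::
  "('dt list \<Rightarrow> 'x set) \<Rightarrow> ('dt list \<Rightarrow> 'dt list \<Rightarrow> (nat \<Rightarrow> nat) \<Rightarrow> 'x \<Rightarrow> 'x) \<Rightarrow>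
   (('dt list \<Rightarrow> 'x set) \<Rightarrow> 'a set) \<Rightarrow>
   (('dt list \<Rightarrow> 'x set) \<Rightarrow> ('dt list \<Rightarrow> 'x set) \<Rightarrow> 'a \<Rightarrow> 'a) \<Rightarrow> bool" where
  "is_presheaf X XA K r \<longleftrightarrow>
     (\<forall>U V. is_subschema X XA U \<and> is_subschema X XA V \<and> U \<le> V \<longrightarrow> r V U \<in> K V \<rightarrow> K U) \<and>
     (\<forall>U. is_subschema X XA U \<longrightarrow> (\<forall>a \<in> K U. r U U a = a)) \<and>
     (\<forall>U V W. is_subschema X XA U \<and> is_subschema X XA V \<and> is_subschema X XA W \<and> U \<le> V \<and> V \<le> W \<longrightarrow>
        (\<forall>a \<in> K W. r V U (r W V a) = r W U a))"

text \<open>Sheaf condition for all diagrams D : I -> Sub(X) whose index category has object set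
  I (a set of the index type 'i); the arrows of I are recorded by the relation R (only the
  existence of an arrow i -> j matters for the limit in Sets).\<close>
definition is_sheaf ::
  "'i itself \<Rightarrow> ('dt list \<Rightarrow> 'x set) \<Rightarrow> ('dt list \<Rightarrow> 'dt list \<Rightarrow> (nat \<Rightarrow> nat) \<Rightarrow> 'x \<Rightarrow> 'x) \<Rightarrow>
   (('dt list \<Rightarrow> 'x set) \<Rightarrow> 'a set) \<Rightarrow>
   (('dt list \<Rightarrow> 'x set) \<Rightarrow> ('dt list \<Rightarrow> 'x set) \<Rightarrow> 'a \<Rightarrow> 'a) \<Rightarrow> bool" where
  "is_sheaf ityp X XA K r \<longleftrightarrow> is_presheaf X XA K r \<and>
     (\<forall>(I :: 'i set) (R :: 'i \<Rightarrow> 'i \<Rightarrow> bool) D.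
        (\<forall>i \<in> I. is_subschema X XA (D i)) \<and>
        (\<forall>i j. R i j \<longrightarrow> i \<in> I \<and> j \<in> I \<and> D i \<le> D j) \<longrightarrow>
        bij_betw (\<lambda>a. \<lambda>i \<in> I. r (sub_colim X XA I D) (D i) a)
          (K (sub_colim X XA I D))
          {k \<in> extensional I. (\<forall>i \<in> I. k i \<in> K (D i)) \<and>
                               (\<forall>i j. R i j \<longrightarrow> r (D j) (D i) (k j) = k i)})"

definition shv_hom ::
  "('dt list \<Rightarrow> 'x set) \<Rightarrow> ('dt list \<Rightarrow> 'dt list \<Rightarrow> (nat \<Rightarrow> nat) \<Rightarrow> 'x \<Rightarrow> 'x) \<Rightarrow>
   (('dt list \<Rightarrow> 'x set) \<Rightarrow> 'a set) \<Rightarrow> (('dt list \<Rightarrow> 'x set) \<Rightarrow> ('dt list \<Rightarrow> 'x set) \<Rightarrow> 'a \<Rightarrow> 'a) \<Rightarrow>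
   (('dt list \<Rightarrow> 'x set) \<Rightarrow> 'b set) \<Rightarrow> (('dt list \<Rightarrow> 'x set) \<Rightarrow> ('dt list \<Rightarrow> 'x set) \<Rightarrow> 'b \<Rightarrow> 'b) \<Rightarrow>
   (('dt list \<Rightarrow> 'x set) \<Rightarrow> 'a \<Rightarrow> 'b) \<Rightarrow> bool" where
  "shv_hom X XA K r K' r' \<alpha> \<longleftrightarrow>
     (\<forall>U. is_subschema X XA U \<longrightarrow> \<alpha> U \<in> K U \<rightarrow> K' U) \<and>
     (\<forall>U V. is_subschema X XA U \<and> is_subschema X XA V \<and> U \<le> V \<longrightarrow>
        (\<forall>a \<in> K V. \<alpha> U (r V U a) = r' V U (\<alpha> V a)))"

definition sub_img :: "('dt list \<Rightarrow> 'x \<Rightarrow> 'y) \<Rightarrow> ('dt list \<Rightarrow> 'x set) \<Rightarrow> 'dt list \<Rightarrow> 'y set" where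
  "sub_img f U = (\<lambda>s. f s ` U s)"

definition sub_pre :: "('dt list \<Rightarrow> 'x set) \<Rightarrow> ('dt list \<Rightarrow> 'x \<Rightarrow> 'y) \<Rightarrow> ('dt list \<Rightarrow> 'y set) \<Rightarrow> 'dt list \<Rightarrow> 'x set" where
  "sub_pre X f V = (\<lambda>s. {x \<in> X s. f s x \<in> V s})"

definition pb_obj :: "('dt list \<Rightarrow> 'x \<Rightarrow> 'y) \<Rightarrow> (('dt list \<Rightarrow> 'y set) \<Rightarrow> 'a set) \<Rightarrow> ('dt list \<Rightarrow> 'x set) \<Rightarrow> 'a set" where
  "pb_obj f K = (\<lambda>U. K (sub_img f U))"

definition pb_res :: "('dt list \<Rightarrow> 'x \<Rightarrow> 'y) \<Rightarrow> (('dt list \<Rightarrow> 'y set) \<Rightarrow> ('dt list \<Rightarrow> 'y set) \<Rightarrow> 'a \<Rightarrow> 'a) \<Rightarrow>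
   ('dt list \<Rightarrow> 'x set) \<Rightarrow> ('dt list \<Rightarrow> 'x set) \<Rightarrow> 'a \<Rightarrow> 'a" where
  "pb_res f r = (\<lambda>U' U. r (sub_img f U') (sub_img f U))"

definition pf_obj :: "('dt list \<Rightarrow> 'x set) \<Rightarrow> ('dt list \<Rightarrow> 'x \<Rightarrow> 'y) \<Rightarrow> (('dt list \<Rightarrow> 'x set) \<Rightarrow> 'a set) \<Rightarrow> ('dt list \<Rightarrow> 'y set) \<Rightarrow> 'a set" where
  "pf_obj X f K = (\<lambda>V. K (sub_pre X f V))"

definition pf_res :: "('dt list \<Rightarrow> 'x set) \<Rightarrow> ('dt list \<Rightarrow> 'x \<Rightarrow> 'y) \<Rightarrow> (('dt list \<Rightarrow> 'x set) \<Rightarrow> ('dt list \<Rightarrow> 'x set) \<Rightarrow> 'a \<Rightarrow> 'a) \<Rightarrow>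
   ('dt list \<Rightarrow> 'y set) \<Rightarrow> ('dt list \<Rightarrow> 'y set) \<Rightarrow> 'a \<Rightarrow> 'a" where
  "pf_res X f r = (\<lambda>V' V. r (sub_pre X f V') (sub_pre X f V))"

end

theory Submission
  imports Defs
begin


lemma colim_eq:
  assumes "\<forall>i\<in>I. is_subschema X XA (D i)"
  shows "sub_colim X XA I D = (\<lambda>s. \<Union>i\<in>I. D i s)"
proof (rule ext)
  fix s
  define W where "W = (\<lambda>s. \<Union>i\<in>I. D i s)"
  have us: "is_subschema X XA W"
    unfolding is_subschema_def W_def
  proof (intro conjI allI impI)
    fix s show "(\<Union>i\<in>I. D i s) \<subseteq> X s" using assms unfolding is_subschema_def by blast
  next
    fix s t h x assume h: "simple_mor s t h \<and> x \<in> (\<Union>i\<in>I. D i t)"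
    then obtain i where "i \<in> I" "x \<in> D i t" by blast
    then have "XA s t h x \<in> D i s" using assms h unfolding is_subschema_def by blast
    then show "XA s t h x \<in> (\<Union>i\<in>I. D i s)" using \<open>i \<in> I\<close> by blast
  qed
  have le: "\<forall>i\<in>I. D i \<le> W" unfolding W_def le_fun_def by blast
  have 1: "W s \<in> {S s |S. is_subschema X XA S \<and> (\<forall>i\<in>I. D i \<le> S)}"
    using us le by blast
  have 2: "W s \<subseteq> T" if "T \<in> {S s |S. is_subschema X XA S \<and> (\<forall>i\<in>I. D i \<le> S)}" for T
    using that unfolding W_def le_fun_def by blast
  have "\<Inter> {S s |S. is_subschema X XA S \<and> (\<forall>i\<in>I. D i \<le> S)} = W s"
    using 1 2 by blast
  then show "sub_colim X XA I D s = (\<Union>i\<in>I. D i s)" unfolding sub_colim_def W_def by simp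
qed

lemma img_sub:
  assumes m: "is_schema_mor X XA Y YA f" and u: "is_subschema X XA U"
  shows "is_subschema Y YA (sub_img f U)"
  unfolding is_subschema_def sub_img_def
proof (intro conjI allI impI)
  fix s show "f s ` U s \<subseteq> Y s" using m u unfolding is_schema_mor_def is_subschema_def Pi_def by blast
next
  fix s t h y assume h: "simple_mor s t h \<and> y \<in> f t ` U t"
  then obtain x where x: "x \<in> U t" "y = f t x" by blast
  have xX: "x \<in> X t" using u x unfolding is_subschema_def by blast
  have "f s (XA s t h x) = YA s t h (f t x)" using m h xX unfolding is_schema_mor_def by blast
  moreover have "XA s t h x \<in> U s" using u h x unfolding is_subschema_def by blast
  ultimately show "YA s t h y \<in> f s ` U s" using x by force
qed

lemma pre_sub:
  assumes x: "is_schema X XA" and m: "is_schema_mor X XA Y YA f" and v: "is_subschema Y YA V"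
  shows "is_subschema X XA (sub_pre X f V)"
  unfolding is_subschema_def sub_pre_def
proof (intro conjI allI impI)
  fix s show "{x \<in> X s. f s x \<in> V s} \<subseteq> X s" by blast
next
  fix s t h y assume h: "simple_mor s t h \<and> y \<in> {x \<in> X t. f t x \<in> V t}"
  have "XA s t h y \<in> X s" using x h unfolding is_schema_def Pi_def by blast
  moreover have "f s (XA s t h y) = YA s t h (f t y)" using m h unfolding is_schema_mor_def by blast
  moreover have "YA s t h (f t y) \<in> V s" using v h unfolding is_subschema_def by blast
  ultimately show "XA s t h y \<in> {x \<in> X s. f s x \<in> V s}" by simp
qed

lemma img_mono: "U \<le> V \<Longrightarrow> sub_img f U \<le> sub_img f V"
  by (auto simp: sub_img_def le_fun_def)

lemma pre_mono: "U \<le> V \<Longrightarrow> sub_pre X f U \<le> sub_pre X f V"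
  by (auto simp: sub_pre_def le_fun_def)

lemma img_pre_img: "is_subschema X XA U \<Longrightarrow> sub_img f (sub_pre X f (sub_img f U)) = sub_img f U"
  unfolding is_subschema_def sub_img_def sub_pre_def by (rule ext) auto

lemma pre_img_pre: "sub_pre X f (sub_img f (sub_pre X f V)) = sub_pre X f V"
  unfolding sub_img_def sub_pre_def by (rule ext) auto

lemma img_pre_le: "sub_img f (sub_pre X f V) \<le> V"
  unfolding sub_img_def sub_pre_def le_fun_def by blast

lemma le_pre_img: "is_subschema X XA U \<Longrightarrow> U \<le> sub_pre X f (sub_img f U)"
  unfolding is_subschema_def sub_img_def sub_pre_def le_fun_def by blast




lemma presheafD:
  assumes "is_presheaf X XA K r"
  shows "\<And>U V. is_subschema X XA U \<Longrightarrow> is_subschema X XA V \<Longrightarrow> U \<le> V \<Longrightarrow> r V U \<in> K V \<rightarrow> K U"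
    and "\<And>U a. is_subschema X XA U \<Longrightarrow> a \<in> K U \<Longrightarrow> r U U a = a"
    and "\<And>U V W a. is_subschema X XA U \<Longrightarrow> is_subschema X XA V \<Longrightarrow> is_subschema X XA W \<Longrightarrow>
          U \<le> V \<Longrightarrow> V \<le> W \<Longrightarrow> a \<in> K W \<Longrightarrow> r V U (r W V a) = r W U a"
  using assms unfolding is_presheaf_def by blast+

lemma sheaf_presheaf: "is_sheaf ityp X XA K r \<Longrightarrow> is_presheaf X XA K r"
  unfolding is_sheaf_def by blast

lemma shv_homD:
  assumes "shv_hom X XA K r K' r' \<alpha>"
  shows "\<And>U. is_subschema X XA U \<Longrightarrow> \<alpha> U \<in> K U \<rightarrow> K' U"
    and "\<And>U V a. is_subschema X XA U \<Longrightarrow> is_subschema X XA V \<Longrightarrow> U \<le> V \<Longrightarrow> a \<in> K V \<Longrightarrow>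
           \<alpha> U (r V U a) = r' V U (\<alpha> V a)"
  using assms unfolding shv_hom_def by blast+

lemma pb_presheaf:
  assumes m: "is_schema_mor X XA Y YA f" and ps: "is_presheaf Y YA K r"
  shows "is_presheaf X XA (pb_obj f K) (pb_res f r)"
  unfolding is_presheaf_def pb_obj_def pb_res_def
proof (intro conjI allI impI ballI)
  fix U V assume h: "is_subschema X XA U \<and> is_subschema X XA V \<and> U \<le> V"
  show "r (sub_img f V) (sub_img f U) \<in> K (sub_img f V) \<rightarrow> K (sub_img f U)"
    using h by (intro presheafD(1)[OF ps] img_sub[OF m] img_mono) auto
next
  fix U a assume h: "is_subschema X XA U" "a \<in> K (sub_img f U)"
  show "r (sub_img f U) (sub_img f U) a = a" using h by (intro presheafD(2)[OF ps] img_sub[OF m])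
next
  fix U V W a assume h: "is_subschema X XA U \<and> is_subschema X XA V \<and> is_subschema X XA W \<and> U \<le> V \<and> V \<le> W"
    and a: "a \<in> K (sub_img f W)"
  show "r (sub_img f V) (sub_img f U) (r (sub_img f W) (sub_img f V) a) = r (sub_img f W) (sub_img f U) a"
    using h a by (intro presheafD(3)[OF ps] img_sub[OF m] img_mono) auto
qed

lemma pf_presheaf:
  assumes x: "is_schema X XA" and m: "is_schema_mor X XA Y YA f" and ps: "is_presheaf X XA K r"
  shows "is_presheaf Y YA (pf_obj X f K) (pf_res X f r)"
  unfolding is_presheaf_def pf_obj_def pf_res_def
proof (intro conjI allI impI ballI)
  fix U V assume h: "is_subschema Y YA U \<and> is_subschema Y YA V \<and> U \<le> V"
  show "r (sub_pre X f V) (sub_pre X f U) \<in> K (sub_pre X f V) \<rightarrow> K (sub_pre X f U)"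
    using h by (intro presheafD(1)[OF ps] pre_sub[OF x m] pre_mono) auto
next
  fix U a assume h: "is_subschema Y YA U" "a \<in> K (sub_pre X f U)"
  show "r (sub_pre X f U) (sub_pre X f U) a = a" using h by (intro presheafD(2)[OF ps] pre_sub[OF x m])
next
  fix U V W a assume h: "is_subschema Y YA U \<and> is_subschema Y YA V \<and> is_subschema Y YA W \<and> U \<le> V \<and> V \<le> W"
    and a: "a \<in> K (sub_pre X f W)"
  show "r (sub_pre X f V) (sub_pre X f U) (r (sub_pre X f W) (sub_pre X f V) a) = r (sub_pre X f W) (sub_pre X f U) a"
    using h a by (intro presheafD(3)[OF ps] pre_sub[OF x m] pre_mono) auto
qed

lemma sheafD:
  fixes I :: "'i set"
  assumes sh: "is_sheaf (ityp :: 'i itself) X XA K r"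
    and h1: "\<forall>i \<in> I. is_subschema X XA (D i)" and h2: "\<forall>i j. R i j \<longrightarrow> i \<in> I \<and> j \<in> I \<and> D i \<le> D j"
  shows "bij_betw (\<lambda>a. \<lambda>i \<in> I. r (sub_colim X XA I D) (D i) a)
          (K (sub_colim X XA I D))
          {k \<in> extensional I. (\<forall>i \<in> I. k i \<in> K (D i)) \<and>
                               (\<forall>i j. R i j \<longrightarrow> r (D j) (D i) (k j) = k i)}"
proof -
  have "\<forall>(I :: 'i set) (R :: 'i \<Rightarrow> 'i \<Rightarrow> bool) D.
        (\<forall>i \<in> I. is_subschema X XA (D i)) \<and>
        (\<forall>i j. R i j \<longrightarrow> i \<in> I \<and> j \<in> I \<and> D i \<le> D j) \<longrightarrow>
        bij_betw (\<lambda>a. \<lambda>i \<in> I. r (sub_colim X XA I D) (D i) a)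
          (K (sub_colim X XA I D))
          {k \<in> extensional I. (\<forall>i \<in> I. k i \<in> K (D i)) \<and>
                               (\<forall>i j. R i j \<longrightarrow> r (D j) (D i) (k j) = k i)}"
    using sh unfolding is_sheaf_def by (rule conjunct2)
  then show ?thesis using conjI[OF h1 h2] by (elim allE[of _ I] allE[of _ R] allE[of _ D] impE)
qed

lemma sheafI:
  assumes "is_presheaf X XA K r"
    and "\<And>(I :: 'i set) R D. \<forall>i \<in> I. is_subschema X XA (D i) \<Longrightarrow>
        \<forall>i j. R i j \<longrightarrow> i \<in> I \<and> j \<in> I \<and> D i \<le> D j \<Longrightarrow>
        bij_betw (\<lambda>a. \<lambda>i \<in> I. r (sub_colim X XA I D) (D i) a)
          (K (sub_colim X XA I D))
          {k \<in> extensional I. (\<forall>i \<in> I. k i \<in> K (D i)) \<and>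
                               (\<forall>i j. R i j \<longrightarrow> r (D j) (D i) (k j) = k i)}"
  shows "is_sheaf (ityp :: 'i itself) X XA K r"
  unfolding is_sheaf_def
proof (intro conjI allI impI)
  show "is_presheaf X XA K r" by (rule assms(1))
next
  fix I :: "'i set" and R D
  assume h: "(\<forall>i \<in> I. is_subschema X XA (D i)) \<and> (\<forall>i j. R i j \<longrightarrow> i \<in> I \<and> j \<in> I \<and> D i \<le> D j)"
  then have a: "\<forall>i \<in> I. is_subschema X XA (D i)" and b: "\<forall>i j. R i j \<longrightarrow> i \<in> I \<and> j \<in> I \<and> D i \<le> D j"
    by (rule conjunct1, rule conjunct2)
  show "bij_betw (\<lambda>a. \<lambda>i \<in> I. r (sub_colim X XA I D) (D i) a)
          (K (sub_colim X XA I D))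
          {k \<in> extensional I. (\<forall>i \<in> I. k i \<in> K (D i)) \<and>
                               (\<forall>i j. R i j \<longrightarrow> r (D j) (D i) (k j) = k i)}"
    by (rule assms(2)[OF a b])
qed

lemma pb_sheaf:
  fixes ityp :: "'i itself"
  assumes m: "is_schema_mor X XA Y YA f" and sh: "is_sheaf ityp Y YA K r"
  shows "is_sheaf ityp X XA (pb_obj f K) (pb_res f r)"
proof -
  have "is_presheaf X XA (pb_obj f K) (pb_res f r)"
    by (rule pb_presheaf[OF m sheaf_presheaf[OF sh]])
  moreover have "bij_betw (\<lambda>a. \<lambda>i \<in> I. pb_res f r (sub_colim X XA I D) (D i) a)
          (pb_obj f K (sub_colim X XA I D))
          {k \<in> extensional I. (\<forall>i \<in> I. k i \<in> pb_obj f K (D i)) \<and>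
                               (\<forall>i j. R i j \<longrightarrow> pb_res f r (D j) (D i) (k j) = k i)}"
    if h1: "\<forall>i \<in> I. is_subschema X XA (D i)" and h2: "\<forall>i j. R i j \<longrightarrow> i \<in> I \<and> j \<in> I \<and> D i \<le> D j"
    for I :: "'i set" and R D
  proof -
    define D' where "D' = (\<lambda>i. sub_img f (D i))"
    have s': "\<forall>i \<in> I. is_subschema Y YA (D' i)" using h1 img_sub[OF m] unfolding D'_def by blast
    have r': "\<forall>i j. R i j \<longrightarrow> i \<in> I \<and> j \<in> I \<and> D' i \<le> D' j" using h2 img_mono unfolding D'_def by blast
    have eq: "sub_img f (sub_colim X XA I D) = sub_colim Y YA I D'"
      unfolding colim_eq[OF h1] colim_eq[OF s'] by (rule ext) (auto simp: D'_def sub_img_def)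
    have "bij_betw (\<lambda>a. \<lambda>i \<in> I. r (sub_colim Y YA I D') (D' i) a)
          (K (sub_colim Y YA I D'))
          {k \<in> extensional I. (\<forall>i \<in> I. k i \<in> K (D' i)) \<and>
                               (\<forall>i j. R i j \<longrightarrow> r (D' j) (D' i) (k j) = k i)}"
      by (rule sheafD[OF sh s' r'])
    then show ?thesis unfolding pb_obj_def pb_res_def eq D'_def .
  qed
  ultimately show ?thesis by (intro sheafI)
qed

lemma pf_sheaf:
  fixes ityp :: "'i itself"
  assumes x: "is_schema X XA" and m: "is_schema_mor X XA Y YA f" and sh: "is_sheaf ityp X XA K r"
  shows "is_sheaf ityp Y YA (pf_obj X f K) (pf_res X f r)"
proof -
  have "is_presheaf Y YA (pf_obj X f K) (pf_res X f r)"
    by (rule pf_presheaf[OF x m sheaf_presheaf[OF sh]])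
  moreover have "bij_betw (\<lambda>a. \<lambda>i \<in> I. pf_res X f r (sub_colim Y YA I D) (D i) a)
          (pf_obj X f K (sub_colim Y YA I D))
          {k \<in> extensional I. (\<forall>i \<in> I. k i \<in> pf_obj X f K (D i)) \<and>
                               (\<forall>i j. R i j \<longrightarrow> pf_res X f r (D j) (D i) (k j) = k i)}"
    if h1: "\<forall>i \<in> I. is_subschema Y YA (D i)" and h2: "\<forall>i j. R i j \<longrightarrow> i \<in> I \<and> j \<in> I \<and> D i \<le> D j"
    for I :: "'i set" and R D
  proof -
    define D' where "D' = (\<lambda>i. sub_pre X f (D i))"
    have s': "\<forall>i \<in> I. is_subschema X XA (D' i)" using h1 pre_sub[OF x m] unfolding D'_def by blast
    have r': "\<forall>i j. R i j \<longrightarrow> i \<in> I \<and> j \<in> I \<and> D' i \<le> D' j" using h2 pre_mono unfolding D'_def by blast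
    have eq: "sub_pre X f (sub_colim Y YA I D) = sub_colim X XA I D'"
      unfolding colim_eq[OF h1] colim_eq[OF s'] by (rule ext) (auto simp: D'_def sub_pre_def)
    have "bij_betw (\<lambda>a. \<lambda>i \<in> I. r (sub_colim X XA I D') (D' i) a)
          (K (sub_colim X XA I D'))
          {k \<in> extensional I. (\<forall>i \<in> I. k i \<in> K (D' i)) \<and>
                               (\<forall>i j. R i j \<longrightarrow> r (D' j) (D' i) (k j) = k i)}"
      by (rule sheafD[OF sh s' r'])
    then show ?thesis unfolding pf_obj_def pf_res_def eq D'_def .
  qed
  ultimately show ?thesis by (intro sheafI)
qed

theorem lemma4p2p8:
  fixes pi :: "'u \<Rightarrow> 'dt"
    and ityp :: "'i itself"
    and X :: "'dt list \<Rightarrow> 'x set" and XA :: "'dt list \<Rightarrow> 'dt list \<Rightarrow> (nat \<Rightarrow> nat) \<Rightarrow> 'x \<Rightarrow> 'x"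
    and Y :: "'dt list \<Rightarrow> 'y set" and YA :: "'dt list \<Rightarrow> 'dt list \<Rightarrow> (nat \<Rightarrow> nat) \<Rightarrow> 'y \<Rightarrow> 'y"
    and f :: "'dt list \<Rightarrow> 'x \<Rightarrow> 'y"
  assumes "is_schema X XA" and "is_schema Y YA" and "is_schema_mor X XA Y YA f"
  shows
    \<comment> \<open>f^* sends sheaves on Y to sheaves on X, and morphisms to morphisms\<close>
    "(\<forall>(K :: ('dt list \<Rightarrow> 'y set) \<Rightarrow> 'a set) r.
        is_sheaf ityp Y YA K r \<longrightarrow> is_sheaf ityp X XA (pb_obj f K) (pb_res f r)) \<and>
     (\<forall>(K :: ('dt list \<Rightarrow> 'y set) \<Rightarrow> 'a set) r (K' :: ('dt list \<Rightarrow> 'y set) \<Rightarrow> 'b set) r' \<alpha>.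
        is_sheaf ityp Y YA K r \<and> is_sheaf ityp Y YA K' r' \<and> shv_hom Y YA K r K' r' \<alpha> \<longrightarrow>
        shv_hom X XA (pb_obj f K) (pb_res f r) (pb_obj f K') (pb_res f r') (\<lambda>U. \<alpha> (sub_img f U))) \<and>
     \<comment> \<open>f_* sends sheaves on X to sheaves on Y, and morphisms to morphisms\<close>
     (\<forall>(K :: ('dt list \<Rightarrow> 'x set) \<Rightarrow> 'a set) r.
        is_sheaf ityp X XA K r \<longrightarrow> is_sheaf ityp Y YA (pf_obj X f K) (pf_res X f r)) \<and>
     (\<forall>(K :: ('dt list \<Rightarrow> 'x set) \<Rightarrow> 'a set) r (K' :: ('dt list \<Rightarrow> 'x set) \<Rightarrow> 'b set) r' \<alpha>.
        is_sheaf ityp X XA K r \<and> is_sheaf ityp X XA K' r' \<and> shv_hom X XA K r K' r' \<alpha> \<longrightarrow>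
        shv_hom Y YA (pf_obj X f K) (pf_res X f r) (pf_obj X f K') (pf_res X f r') (\<lambda>V. \<alpha> (sub_pre X f V))) \<and>
     \<comment> \<open>adjunction f^* -| f_* via unit eta and counit eps\<close>
     (\<exists>(\<eta> :: (('dt list \<Rightarrow> 'y set) \<Rightarrow> 'a set) \<Rightarrow> (('dt list \<Rightarrow> 'y set) \<Rightarrow> ('dt list \<Rightarrow> 'y set) \<Rightarrow> 'a \<Rightarrow> 'a)
                 \<Rightarrow> ('dt list \<Rightarrow> 'y set) \<Rightarrow> 'a \<Rightarrow> 'a)
        (\<epsilon> :: (('dt list \<Rightarrow> 'x set) \<Rightarrow> 'a set) \<Rightarrow> (('dt list \<Rightarrow> 'x set) \<Rightarrow> ('dt list \<Rightarrow> 'x set) \<Rightarrow> 'a \<Rightarrow> 'a)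
                 \<Rightarrow> ('dt list \<Rightarrow> 'x set) \<Rightarrow> 'a \<Rightarrow> 'a).
        (\<forall>K r. is_sheaf ityp Y YA K r \<longrightarrow>
           shv_hom Y YA K r (pf_obj X f (pb_obj f K)) (pf_res X f (pb_res f r)) (\<eta> K r)) \<and>
        (\<forall>K r K' r' \<alpha>. is_sheaf ityp Y YA K r \<and> is_sheaf ityp Y YA K' r' \<and> shv_hom Y YA K r K' r' \<alpha> \<longrightarrow>
           (\<forall>V. is_subschema Y YA V \<longrightarrow> (\<forall>a \<in> K V.
              \<eta> K' r' V (\<alpha> V a) = \<alpha> (sub_img f (sub_pre X f V)) (\<eta> K r V a)))) \<and>
        (\<forall>K r. is_sheaf ityp X XA K r \<longrightarrow>
           shv_hom X XA (pb_obj f (pf_obj X f K)) (pb_res f (pf_res X f r)) K r (\<epsilon> K r)) \<and>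
        (\<forall>K r K' r' \<alpha>. is_sheaf ityp X XA K r \<and> is_sheaf ityp X XA K' r' \<and> shv_hom X XA K r K' r' \<alpha> \<longrightarrow>
           (\<forall>U. is_subschema X XA U \<longrightarrow> (\<forall>a \<in> K (sub_pre X f (sub_img f U)).
              \<epsilon> K' r' U (\<alpha> (sub_pre X f (sub_img f U)) a) = \<alpha> U (\<epsilon> K r U a)))) \<and>
        (\<forall>K r. is_sheaf ityp Y YA K r \<longrightarrow>
           (\<forall>U. is_subschema X XA U \<longrightarrow> (\<forall>a \<in> K (sub_img f U).
              \<epsilon> (pb_obj f K) (pb_res f r) U (\<eta> K r (sub_img f U) a) = a))) \<and>
        (\<forall>K r. is_sheaf ityp X XA K r \<longrightarrow>
           (\<forall>V. is_subschema Y YA V \<longrightarrow> (\<forall>a \<in> K (sub_pre X f V).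
              \<epsilon> K r (sub_pre X f V) (\<eta> (pf_obj X f K) (pf_res X f r) V a) = a))))"
proof -
  note x = assms(1) and m = assms(3)
  let ?FU = "\<lambda>U. sub_pre X f (sub_img f U)"
  let ?GV = "\<lambda>V. sub_img f (sub_pre X f V)"
  have GVs: "is_subschema Y YA (?GV V)" if "is_subschema Y YA V" for V
    using img_sub[OF m pre_sub[OF x m that]] .
  have FUs: "is_subschema X XA (?FU U)" if "is_subschema X XA U" for U
    using pre_sub[OF x m img_sub[OF m that]] .
  have A: "\<forall>(K :: ('dt list \<Rightarrow> 'y set) \<Rightarrow> 'a set) r.
        is_sheaf ityp Y YA K r \<longrightarrow> is_sheaf ityp X XA (pb_obj f K) (pb_res f r)"
    using pb_sheaf[OF m] by blast
  have B: "\<forall>(K :: ('dt list \<Rightarrow> 'y set) \<Rightarrow> 'a set) r (K' :: ('dt list \<Rightarrow> 'y set) \<Rightarrow> 'b set) r' \<alpha>.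
        is_sheaf ityp Y YA K r \<and> is_sheaf ityp Y YA K' r' \<and> shv_hom Y YA K r K' r' \<alpha> \<longrightarrow>
        shv_hom X XA (pb_obj f K) (pb_res f r) (pb_obj f K') (pb_res f r') (\<lambda>U. \<alpha> (sub_img f U))"
  proof (intro allI impI)
    fix K :: "('dt list \<Rightarrow> 'y set) \<Rightarrow> 'a set" and r and K' :: "('dt list \<Rightarrow> 'y set) \<Rightarrow> 'b set" and r' \<alpha>
    assume "is_sheaf ityp Y YA K r \<and> is_sheaf ityp Y YA K' r' \<and> shv_hom Y YA K r K' r' \<alpha>"
    then have h: "shv_hom Y YA K r K' r' \<alpha>" by blast
    show "shv_hom X XA (pb_obj f K) (pb_res f r) (pb_obj f K') (pb_res f r') (\<lambda>U. \<alpha> (sub_img f U))"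
      unfolding shv_hom_def pb_obj_def pb_res_def
    proof (intro conjI allI impI ballI)
      fix U assume "is_subschema X XA U"
      then show "\<alpha> (sub_img f U) \<in> K (sub_img f U) \<rightarrow> K' (sub_img f U)"
        by (intro shv_homD(1)[OF h] img_sub[OF m])
    next
      fix U V a assume u: "is_subschema X XA U \<and> is_subschema X XA V \<and> U \<le> V" and a: "a \<in> K (sub_img f V)"
      show "\<alpha> (sub_img f U) (r (sub_img f V) (sub_img f U) a) = r' (sub_img f V) (sub_img f U) (\<alpha> (sub_img f V) a)"
        using u a by (intro shv_homD(2)[OF h] img_sub[OF m] img_mono) auto
    qed
  qed
  have C: "\<forall>(K :: ('dt list \<Rightarrow> 'x set) \<Rightarrow> 'a set) r.
        is_sheaf ityp X XA K r \<longrightarrow> is_sheaf ityp Y YA (pf_obj X f K) (pf_res X f r)"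
    using pf_sheaf[OF x m] by blast
  have D: "\<forall>(K :: ('dt list \<Rightarrow> 'x set) \<Rightarrow> 'a set) r (K' :: ('dt list \<Rightarrow> 'x set) \<Rightarrow> 'b set) r' \<alpha>.
        is_sheaf ityp X XA K r \<and> is_sheaf ityp X XA K' r' \<and> shv_hom X XA K r K' r' \<alpha> \<longrightarrow>
        shv_hom Y YA (pf_obj X f K) (pf_res X f r) (pf_obj X f K') (pf_res X f r') (\<lambda>V. \<alpha> (sub_pre X f V))"
  proof (intro allI impI)
    fix K :: "('dt list \<Rightarrow> 'x set) \<Rightarrow> 'a set" and r and K' :: "('dt list \<Rightarrow> 'x set) \<Rightarrow> 'b set" and r' \<alpha>
    assume "is_sheaf ityp X XA K r \<and> is_sheaf ityp X XA K' r' \<and> shv_hom X XA K r K' r' \<alpha>"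
    then have h: "shv_hom X XA K r K' r' \<alpha>" by blast
    show "shv_hom Y YA (pf_obj X f K) (pf_res X f r) (pf_obj X f K') (pf_res X f r') (\<lambda>V. \<alpha> (sub_pre X f V))"
      unfolding shv_hom_def pf_obj_def pf_res_def
    proof (intro conjI allI impI ballI)
      fix U assume "is_subschema Y YA U"
      then show "\<alpha> (sub_pre X f U) \<in> K (sub_pre X f U) \<rightarrow> K' (sub_pre X f U)"
        by (intro shv_homD(1)[OF h] pre_sub[OF x m])
    next
      fix U V a assume u: "is_subschema Y YA U \<and> is_subschema Y YA V \<and> U \<le> V" and a: "a \<in> K (sub_pre X f V)"
      show "\<alpha> (sub_pre X f U) (r (sub_pre X f V) (sub_pre X f U) a) = r' (sub_pre X f V) (sub_pre X f U) (\<alpha> (sub_pre X f V) a)"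
        using u a by (intro shv_homD(2)[OF h] pre_sub[OF x m] pre_mono) auto
    qed
  qed
  define \<eta> where "\<eta> = (\<lambda>(K :: ('dt list \<Rightarrow> 'y set) \<Rightarrow> 'a set) (r :: ('dt list \<Rightarrow> 'y set) \<Rightarrow> ('dt list \<Rightarrow> 'y set) \<Rightarrow> 'a \<Rightarrow> 'a) V. r V (?GV V))"
  define \<epsilon> where "\<epsilon> = (\<lambda>(K :: ('dt list \<Rightarrow> 'x set) \<Rightarrow> 'a set) (r :: ('dt list \<Rightarrow> 'x set) \<Rightarrow> ('dt list \<Rightarrow> 'x set) \<Rightarrow> 'a \<Rightarrow> 'a) U. r (?FU U) U)"
  have E1: "\<forall>K r. is_sheaf ityp Y YA K r \<longrightarrow>
           shv_hom Y YA K r (pf_obj X f (pb_obj f K)) (pf_res X f (pb_res f r)) (\<eta> K r)"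
  proof (intro allI impI)
    fix K :: "('dt list \<Rightarrow> 'y set) \<Rightarrow> 'a set" and r assume "is_sheaf ityp Y YA K r"
    then have p: "is_presheaf Y YA K r" by (rule sheaf_presheaf)
    show "shv_hom Y YA K r (pf_obj X f (pb_obj f K)) (pf_res X f (pb_res f r)) (\<eta> K r)"
      unfolding shv_hom_def pf_obj_def pb_obj_def pf_res_def pb_res_def \<eta>_def
    proof (intro conjI allI impI ballI)
      fix U assume u: "is_subschema Y YA U"
      show "r U (?GV U) \<in> K U \<rightarrow> K (?GV U)"
        by (rule presheafD(1)[OF p GVs[OF u] u img_pre_le])
    next
      fix U V a assume h: "is_subschema Y YA U \<and> is_subschema Y YA V \<and> U \<le> V" and a: "a \<in> K V"
      have u: "is_subschema Y YA U" and v: "is_subschema Y YA V" and uv: "U \<le> V" using h by auto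
      have l1: "?GV U \<le> ?GV V" using uv img_mono pre_mono by blast
      have "r U (?GV U) (r V U a) = r V (?GV U) a"
        by (rule presheafD(3)[OF p GVs[OF u] u v img_pre_le uv a])
      also have "\<dots> = r (?GV V) (?GV U) (r V (?GV V) a)"
        by (rule presheafD(3)[OF p GVs[OF u] GVs[OF v] v l1 img_pre_le a, symmetric])
      finally show "r U (?GV U) (r V U a) = r (?GV V) (?GV U) (r V (?GV V) a)" .
    qed
  qed
  have E2: "\<forall>K r K' r' \<alpha>. is_sheaf ityp Y YA K r \<and> is_sheaf ityp Y YA K' r' \<and> shv_hom Y YA K r K' r' \<alpha> \<longrightarrow>
           (\<forall>V. is_subschema Y YA V \<longrightarrow> (\<forall>a \<in> K V.
              \<eta> K' r' V (\<alpha> V a) = \<alpha> (sub_img f (sub_pre X f V)) (\<eta> K r V a)))"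
  proof (intro allI impI ballI)
    fix K :: "('dt list \<Rightarrow> 'y set) \<Rightarrow> 'a set" and r and K' :: "('dt list \<Rightarrow> 'y set) \<Rightarrow> 'a set" and r' \<alpha> V a
    assume "is_sheaf ityp Y YA K r \<and> is_sheaf ityp Y YA K' r' \<and> shv_hom Y YA K r K' r' \<alpha>"
    then have h: "shv_hom Y YA K r K' r' \<alpha>" by blast
    assume v: "is_subschema Y YA V" and a: "a \<in> K V"
    show "\<eta> K' r' V (\<alpha> V a) = \<alpha> (sub_img f (sub_pre X f V)) (\<eta> K r V a)"
      unfolding \<eta>_def by (rule shv_homD(2)[OF h GVs[OF v] v img_pre_le a, symmetric])
  qed
  have E3: "\<forall>K r. is_sheaf ityp X XA K r \<longrightarrow>
           shv_hom X XA (pb_obj f (pf_obj X f K)) (pb_res f (pf_res X f r)) K r (\<epsilon> K r)"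
  proof (intro allI impI)
    fix K :: "('dt list \<Rightarrow> 'x set) \<Rightarrow> 'a set" and r assume "is_sheaf ityp X XA K r"
    then have p: "is_presheaf X XA K r" by (rule sheaf_presheaf)
    show "shv_hom X XA (pb_obj f (pf_obj X f K)) (pb_res f (pf_res X f r)) K r (\<epsilon> K r)"
      unfolding shv_hom_def pf_obj_def pb_obj_def pf_res_def pb_res_def \<epsilon>_def
    proof (intro conjI allI impI ballI)
      fix U assume u: "is_subschema X XA U"
      show "r (?FU U) U \<in> K (?FU U) \<rightarrow> K U"
        by (rule presheafD(1)[OF p u FUs[OF u] le_pre_img[OF u]])
    next
      fix U V a assume h: "is_subschema X XA U \<and> is_subschema X XA V \<and> U \<le> V" and a: "a \<in> K (?FU V)"
      have u: "is_subschema X XA U" and v: "is_subschema X XA V" and uv: "U \<le> V" using h by auto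
      have l1: "?FU U \<le> ?FU V" using uv img_mono pre_mono by blast
      have "r (?FU U) U (r (?FU V) (?FU U) a) = r (?FU V) U a"
        by (rule presheafD(3)[OF p u FUs[OF u] FUs[OF v] le_pre_img[OF u] l1 a])
      also have "\<dots> = r V U (r (?FU V) V a)"
        by (rule presheafD(3)[OF p u v FUs[OF v] uv le_pre_img[OF v] a, symmetric])
      finally show "r (?FU U) U (r (?FU V) (?FU U) a) = r V U (r (?FU V) V a)" .
    qed
  qed
  have E4: "\<forall>K r K' r' \<alpha>. is_sheaf ityp X XA K r \<and> is_sheaf ityp X XA K' r' \<and> shv_hom X XA K r K' r' \<alpha> \<longrightarrow>
           (\<forall>U. is_subschema X XA U \<longrightarrow> (\<forall>a \<in> K (sub_pre X f (sub_img f U)).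
              \<epsilon> K' r' U (\<alpha> (sub_pre X f (sub_img f U)) a) = \<alpha> U (\<epsilon> K r U a)))"
  proof (intro allI impI ballI)
    fix K :: "('dt list \<Rightarrow> 'x set) \<Rightarrow> 'a set" and r and K' :: "('dt list \<Rightarrow> 'x set) \<Rightarrow> 'a set" and r' \<alpha> U a
    assume "is_sheaf ityp X XA K r \<and> is_sheaf ityp X XA K' r' \<and> shv_hom X XA K r K' r' \<alpha>"
    then have h: "shv_hom X XA K r K' r' \<alpha>" by blast
    assume u: "is_subschema X XA U" and a: "a \<in> K (?FU U)"
    show "\<epsilon> K' r' U (\<alpha> (?FU U) a) = \<alpha> U (\<epsilon> K r U a)"
      unfolding \<epsilon>_def by (rule shv_homD(2)[OF h u FUs[OF u] le_pre_img[OF u] a, symmetric])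
  qed
  have E5: "\<forall>K r. is_sheaf ityp Y YA K r \<longrightarrow>
           (\<forall>U. is_subschema X XA U \<longrightarrow> (\<forall>a \<in> K (sub_img f U).
              \<epsilon> (pb_obj f K) (pb_res f r) U (\<eta> K r (sub_img f U) a) = a))"
  proof (intro allI impI ballI)
    fix K :: "('dt list \<Rightarrow> 'y set) \<Rightarrow> 'a set" and r U a assume sh: "is_sheaf ityp Y YA K r" and u: "is_subschema X XA U" and a: "a \<in> K (sub_img f U)"
    have p: "is_presheaf Y YA K r" using sh by (rule sheaf_presheaf)
    have e: "sub_img f (?FU U) = sub_img f U" using u by (rule img_pre_img)
    have iu: "is_subschema Y YA (sub_img f U)" using img_sub[OF m u] .
    show "\<epsilon> (pb_obj f K) (pb_res f r) U (\<eta> K r (sub_img f U) a) = a"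
      unfolding \<epsilon>_def \<eta>_def pb_res_def e
      using presheafD(2)[OF p iu] a by simp
  qed
  have E6: "\<forall>K r. is_sheaf ityp X XA K r \<longrightarrow>
           (\<forall>V. is_subschema Y YA V \<longrightarrow> (\<forall>a \<in> K (sub_pre X f V).
              \<epsilon> K r (sub_pre X f V) (\<eta> (pf_obj X f K) (pf_res X f r) V a) = a))"
  proof (intro allI impI ballI)
    fix K :: "('dt list \<Rightarrow> 'x set) \<Rightarrow> 'a set" and r V a assume sh: "is_sheaf ityp X XA K r" and v: "is_subschema Y YA V" and a: "a \<in> K (sub_pre X f V)"
    have p: "is_presheaf X XA K r" using sh by (rule sheaf_presheaf)
    have e: "sub_pre X f (?GV V) = sub_pre X f V" by (rule pre_img_pre)
    have pv: "is_subschema X XA (sub_pre X f V)" using pre_sub[OF x m v] .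
    show "\<epsilon> K r (sub_pre X f V) (\<eta> (pf_obj X f K) (pf_res X f r) V a) = a"
      unfolding \<epsilon>_def \<eta>_def pf_res_def e
      using presheafD(2)[OF p pv] a by simp
  qed
  show ?thesis
    apply (rule conjI, fact A)
    apply (rule conjI, fact B)
    apply (rule conjI, fact C)
    apply (rule conjI, fact D)
    apply (rule exI[where x=\<eta>], rule exI[where x=\<epsilon>])
    apply (rule conjI, fact E1)
    apply (rule conjI, fact E2)
    apply (rule conjI, fact E3)
    apply (rule conjI, fact E4)
    apply (rule conjI, fact E5)
    apply (fact E6)
    done
qed

end
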